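(* Let $f:\mathbb{N}\to\mathbb{R}$ with $f(1)=1$ be multiplicative (i.e. $f(mn)=f(m)f(n)$ for coprime $m,n$), and suppose $f(p^k)=0$ for every prime $p$ and every integer $k\geq 2$. Assume there exist $C>0$ and $\gamma\in\mathbb{R}$ such that $|f(n)|\leq Cn^\gamma$ for all $n\geq2$. Then $$|f^{-1}(n)| \leq C^{\Omega(n)} n^{\gamma}, \quad n\geq2.$$
   Context: $f^{-1}$ denotes the Dirichlet inverse of $f$: the arithmetic function with $\sum_{d\mid n} f(n/d) f^{-1}(d)=\varepsilon(n)$ for all $n$, where $\varepsilon(1)=1$ and $\varepsilon(n)=0$ for $n\ge2$. $\Omega(n)$ is the number of prime factors of $n$ counted with multiplicity. *)

theory Defs
  imports Complex_Main "HOL-Computational_Algebra.Primes"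
begin

text \<open>Arithmetic functions are modelled as functions on nat; only positive arguments matter.
  g is a Dirichlet inverse of f if  sum over d dvd n of f (n div d) * g d  equals
  epsilon n for every n \<ge> 1.\<close>
definition is_dirichlet_inverse :: "(nat \<Rightarrow> real) \<Rightarrow> (nat \<Rightarrow> real) \<Rightarrow> bool" where
  "is_dirichlet_inverse f g \<longleftrightarrow>
     (\<forall>n>0. (\<Sum>d\<in>{d. d dvd n}. f (n div d) * g d) = (if n = 1 then 1 else 0))"

definition bigOmega :: "nat \<Rightarrow> nat" where
  "bigOmega n = size (prime_factorization n)"

end

theory Submission
  imports Defs
begin

definition GG :: "(nat \<Rightarrow> real) \<Rightarrow> nat \<Rightarrow> real" where
  "GG f n = (\<Prod>p\<in>#prime_factorization n. - f p)"

lemma GG_mult: "x > 0 \<Longrightarrow> y > 0 \<Longrightarrow> GG f (x * y) = GG f x * GG f y"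
  unfolding GG_def by (simp add: prime_factorization_mult)

lemma GG_prime: "prime p \<Longrightarrow> GG f p = - f p"
  unfolding GG_def by (simp add: prime_factorization_prime)

lemma GG_1: "GG f 1 = 1"
  unfolding GG_def by simp

lemma GG_Suc0: "GG f (Suc 0) = 1"
  unfolding GG_def by simp

lemma bigOmega_Suc0: "bigOmega (Suc 0) = 0"
  unfolding bigOmega_def by simp

lemma bigOmega_mult: "x > 0 \<Longrightarrow> y > 0 \<Longrightarrow> bigOmega (x * y) = bigOmega x + bigOmega y"
  unfolding bigOmega_def by (simp add: prime_factorization_mult)

lemma bigOmega_prime: "prime p \<Longrightarrow> bigOmega p = 1"
  unfolding bigOmega_def by (simp add: prime_factorization_prime)

lemma bigOmega_1: "bigOmega 1 = 0"
  unfolding bigOmega_def by simp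

lemma l1: "prime (p::nat) \<Longrightarrow> x > 0 \<Longrightarrow> \<exists>y. x = p ^ multiplicity p x * y \<and> \<not> p dvd y"
  by (metis multiplicity_decompose' gr_implies_not0 not_prime_unit)
lemma l2: "prime (p::nat) \<Longrightarrow> x > 0 \<Longrightarrow> p^2 dvd x \<Longrightarrow> 2 \<le> multiplicity p x"
  using power_dvd_iff_le_multiplicity[where p=p and n=2 and x=x] prime_gt_1_nat[of p] by simp
lemma l3: "prime (p::nat) \<Longrightarrow> \<not> p dvd y \<Longrightarrow> coprime (p ^ k) y"
  by (simp add: prime_imp_coprime coprime_power_left_iff)
lemma l4: "x = p ^ k * y \<Longrightarrow> (x::nat) > 0 \<Longrightarrow> y > 0"
  by (cases "y = 0") auto

theorem proposition3p5:
  fixes f g :: "nat \<Rightarrow> real" and C \<gamma> :: real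
  assumes f1: "f 1 = 1"
    and mult: "\<And>m n. m > 0 \<Longrightarrow> n > 0 \<Longrightarrow> coprime m n \<Longrightarrow> f (m * n) = f m * f n"
    and sqfree: "\<And>p k. prime p \<Longrightarrow> k \<ge> 2 \<Longrightarrow> f (p ^ k) = 0"
    and Cpos: "C > 0"
    and bound: "\<And>n. n \<ge> 2 \<Longrightarrow> \<bar>f n\<bar> \<le> C * real n powr \<gamma>"
    and inv: "is_dirichlet_inverse f g"
  shows "\<forall>n\<ge>2. \<bar>g n\<bar> \<le> C ^ bigOmega n * real n powr \<gamma>"
proof -
  define G where "G = GG f"
  have zero: "f x = 0" if p: "prime p" and x: "x > 0" and d: "p^2 dvd x" for p x
  proof -
    obtain y where y: "x = p ^ multiplicity p x * y" "\<not> p dvd y"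
      using l1[OF p x] by blast
    define k where "k = multiplicity p x"
    have y1: "x = p ^ k * y" using y(1) unfolding k_def .
    have k2: "2 \<le> k" using l2[OF p x d] unfolding k_def .
    have cop: "coprime (p ^ k) y" using l3[OF p y(2)] .
    have y0: "y > 0" using l4[OF y1 x] .
    have pk0: "p ^ k > 0" using p by (simp add: prime_gt_0_nat)
    have "f (p ^ k * y) = f (p ^ k) * f y" using mult[OF pk0 y0 cop] .
    also have "f (p ^ k) = 0" using sqfree[OF p k2] .
    finally show ?thesis using y1 by simp
  qed
  have Ginv: "(\<Sum>d\<in>{d. d dvd n}. f (n div d) * G d) = 0" if n: "n > 1" for n
  proof -
    obtain p where p: "prime p" "p dvd n" using prime_factor_nat[of n] n by auto
    have p0: "p > 0" using p prime_gt_0_nat by blast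
    define h where "h d = f (n div d) * G d" for d
    define S where "S = {d. d dvd n}"
    define T1 where "T1 = {d\<in>S. p dvd (n div d) \<and> \<not> p^2 dvd (n div d)}"
    define T0 where "T0 = {d\<in>S. \<not> p dvd (n div d)}"
    have finS: "finite S" unfolding S_def using n by simp
    have T0im: "T0 = (\<lambda>e. e * p) ` T1"
    proof
      show "(\<lambda>e. e * p) ` T1 \<subseteq> T0"
      proof
        fix x assume "x \<in> (\<lambda>e. e * p) ` T1"
        then obtain e where e: "e \<in> T1" "x = e * p" by auto
        then have ed: "e dvd n" and r: "p dvd n div e" "\<not> p^2 dvd n div e"
          unfolding T1_def S_def by auto
        obtain r where rr: "n div e = p * r" using r(1) by auto
        have nr: "n = e * p * r" using rr ed by (metis dvd_mult_div_cancel mult.assoc)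
        have "\<not> p dvd r" using r(2) rr by (simp add: power2_eq_square)
        moreover have "n div (e * p) = r" using nr p0 n by auto
        ultimately show "x \<in> T0" unfolding T0_def S_def using e nr by auto
      qed
    next
      show "T0 \<subseteq> (\<lambda>e. e * p) ` T1"
      proof
        fix d assume "d \<in> T0"
        then have dd: "d dvd n" and nd: "\<not> p dvd n div d" unfolding T0_def S_def by auto
        have nn: "n = d * (n div d)" using dd by simp
        have "p dvd d" using p nd nn prime_dvd_mult_iff by metis
        then obtain e where e: "d = e * p" by (metis dvd_def mult.commute)
        have "n = e * (p * (n div d))" using nn e by (simp add: mult.assoc mult.commute mult.left_commute)
        hence ed: "e dvd n" and ne: "n div e = p * (n div d)" using n by (metis dvd_triv_left,
            metis gr_implies_not0 nonzero_mult_div_cancel_left mult_0 \<open>n = e * (p * (n div d))\<close>)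
        have "\<not> p^2 dvd n div e" using ne nd p0 by (simp add: power2_eq_square)
        hence "e \<in> T1" unfolding T1_def S_def using ed ne by auto
        thus "d \<in> (\<lambda>e. e * p) ` T1" using e by auto
      qed
    qed
    have injp: "inj_on (\<lambda>e. e * p) T1" using p0 by (auto simp: inj_on_def)
    have cancel: "h (e * p) + h e = 0" if "e \<in> T1" for e
    proof -
      from that have ed: "e dvd n" and r: "p dvd n div e" "\<not> p^2 dvd n div e"
        unfolding T1_def S_def by auto
      obtain r where rr: "n div e = p * r" using r(1) by auto
      have nr: "n = e * p * r" using rr ed by (metis dvd_mult_div_cancel mult.assoc)
      have npr: "\<not> p dvd r" using r(2) rr by (simp add: power2_eq_square)
      have ndp: "n div (e * p) = r" using nr p0 n by auto
      have r0: "r > 0" "e > 0" using nr n by (auto intro: gr0I)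
      have cop: "coprime p r" using npr p by (simp add: prime_imp_coprime)
      have "f (p * r) = f p * f r" using mult[OF p0 r0(1) cop] .
      moreover have "G (e * p) = G e * (- f p)" unfolding G_def
        using GG_mult[OF r0(2) p0] GG_prime[OF p(1)] by simp
      ultimately show ?thesis unfolding h_def using ndp rr by (simp add: algebra_simps)
    qed
    have disj: "T0 \<inter> T1 = {}" unfolding T0_def T1_def by auto
    have sub: "T0 \<union> T1 \<subseteq> S" unfolding T0_def T1_def by auto
    have rest: "\<forall>d\<in>S - (T0 \<union> T1). h d = 0"
    proof
      fix d assume d: "d \<in> S - (T0 \<union> T1)"
      hence "d dvd n" "p^2 dvd n div d" unfolding S_def T0_def T1_def by auto
      moreover have "n div d > 0" using \<open>d dvd n\<close> n
        by (metis dvd_div_eq_0_iff gr0I not_one_less_zero less_trans zero_less_one)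
      ultimately show "h d = 0" unfolding h_def using zero[OF p(1)] by simp
    qed
    have "sum h S = sum h (T0 \<union> T1) + sum h (S - (T0 \<union> T1))"
      using sum.subset_diff[OF sub finS, of h] by (simp add: add.commute)
    also have "sum h (S - (T0 \<union> T1)) = 0" using rest by simp
    also have "sum h (T0 \<union> T1) = sum h T0 + sum h T1"
      using disj finS sub by (meson finite_Un finite_subset sum.union_disjoint)
    also have "sum h T0 = sum (\<lambda>e. h (e * p)) T1"
      unfolding T0im using sum.reindex[OF injp] by simp
    also have "sum (\<lambda>e. h (e * p)) T1 + sum h T1 = sum (\<lambda>e. h (e * p) + h e) T1"
      by (simp add: sum.distrib)
    also have "\<dots> = 0" using cancel by simp
    finally show ?thesis unfolding h_def S_def by simp
  qed
  have eq: "g n = G n" if "n > 0" for n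
    using that
  proof (induction n rule: less_induct)
    case (less n)
    show ?case
    proof (cases "n = 1")
      case True
      have "(\<Sum>d\<in>{d. d dvd (1::nat)}. f (1 div d) * g d) = 1"
        using inv[unfolded is_dirichlet_inverse_def, rule_format, of 1] by simp
      then show ?thesis using True f1 by (simp add: G_def GG_1 GG_Suc0)
    next
      case False
      hence n1: "n > 1" using less.prems by simp
      define S where "S = {d. d dvd n}"
      have finS: "finite S" unfolding S_def using n1 by simp
      have Sn: "S = insert n (S - {n})" unfolding S_def by auto
      have same: "(\<Sum>d\<in>S - {n}. f (n div d) * g d) = (\<Sum>d\<in>S - {n}. f (n div d) * G d)"
      proof (rule sum.cong)
        fix d assume "d \<in> S - {n}"
        hence "d dvd n" "d \<noteq> n" unfolding S_def by auto
        hence "d < n" "d > 0" using n1 by (auto intro: gr0I dest: dvd_imp_le)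
        thus "f (n div d) * g d = f (n div d) * G d" using less.IH by simp
      qed simp
      have A: "(\<Sum>d\<in>S. f (n div d) * g d) = 0"
        using inv n1 unfolding is_dirichlet_inverse_def S_def by auto
      have B: "(\<Sum>d\<in>S. f (n div d) * G d) = 0" using Ginv[OF n1] unfolding S_def .
      have A': "f 1 * g n + (\<Sum>d\<in>S - {n}. f (n div d) * g d) = 0"
        using A finS n1 by (subst (asm) Sn) (simp add: sum.insert_remove)
      have B': "f 1 * G n + (\<Sum>d\<in>S - {n}. f (n div d) * G d) = 0"
        using B finS n1 by (subst (asm) Sn) (simp add: sum.insert_remove)
      show ?thesis using A' B' same f1 by simp
    qed
  qed
  have bnd: "\<bar>G n\<bar> \<le> C ^ bigOmega n * real n powr \<gamma>" if "n > 0" for n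
    using that
  proof (induction n rule: less_induct)
    case (less n)
    show ?case
    proof (cases "n = 1")
      case True
      then show ?thesis by (simp add: G_def GG_1 GG_Suc0 bigOmega_1 bigOmega_Suc0)
    next
      case False
      obtain p where p: "prime p" "p dvd n" using prime_factor_nat[OF False] by auto
      obtain m where m: "n = p * m" using p by auto
      have p0: "p > 0" "p \<ge> 2" using p prime_gt_0_nat prime_ge_2_nat by auto
      have m0: "m > 0" using m less.prems by (auto intro: gr0I)
      have mn: "m < n" using m p0 m0 by simp
      have IH: "\<bar>G m\<bar> \<le> C ^ bigOmega m * real m powr \<gamma>" using less.IH[OF mn m0] .
      have Gn: "G n = - f p * G m" unfolding G_def m using GG_mult[OF p0(1) m0] GG_prime[OF p(1)] by simp
      have On: "bigOmega n = Suc (bigOmega m)" unfolding m using bigOmega_mult[OF p0(1) m0] bigOmega_prime[OF p(1)] by simp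
      have pw: "real n powr \<gamma> = real p powr \<gamma> * real m powr \<gamma>"
        unfolding m by (simp add: powr_mult)
      have "\<bar>G n\<bar> = \<bar>f p\<bar> * \<bar>G m\<bar>" using Gn by (simp add: abs_mult)
      also have "\<dots> \<le> (C * real p powr \<gamma>) * (C ^ bigOmega m * real m powr \<gamma>)"
        by (rule mult_mono[OF bound[OF p0(2)] IH]) (use Cpos in auto)
      also have "\<dots> = C ^ bigOmega n * real n powr \<gamma>" using On pw by (simp add: algebra_simps)
      finally show ?thesis .
    qed
  qed
  show ?thesis using eq bnd by simp
qed

end
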